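(* Let $2\le k_1<k_2<\dots<k_m\le n$ ($m\ge1$) and integers $1\le i_{k_j}\le k_j-1$ with $\operatorname{maj}:=\sum_{j=1}^m i_{k_j}\le k_1$. Let $\pi_1=t_{k_1}^{i_{k_1}}\cdot t_{k_2}^{i_{k_2}}\cdots t_{k_m}^{i_{k_m}}\in D_n$ and let $q$ be an integer with $k_m\le q\le n-1$. Then $$\pi_1\cdot w_q=\begin{cases} w_q\cdot \pi_1 & \text{if } \operatorname{maj}=k_1,\\ w_{\operatorname{maj}}\cdot w_q\cdot \pi_1 & \text{if } \operatorname{maj}<k_1.\end{cases}$$
   Context: $D_n$ ($n\ge 2$) is the Coxeter group with generators $s_{1'},s_1,\dots,s_{n-1}$ and relations $s^2=1$, $(s_i s_{i+1})^3=1$, $(s_is_j)^2=1$ for $|i-j|\ge 2$, $(s_{1'}s_2)^3=1$, $(s_{1'}s_i)^2=1$ for $i\ne 2$. For $2\le k\le n$, $t_k=s_1s_2\cdots s_{k-1}$; for $1\le k\le n-1$, $w_k=s_k s_{k-1}\cdots s_2 s_1 s_{1'} s_2\cdots s_k$. (The hypothesis $\sum_j i_{k_j}\le k_1$ says that $\pi_1$, viewed in $S_n$, is a "standard OGS elementary element", and $\operatorname{maj}$ is its major index.) *)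

theory Defs
  imports "HOL-Algebra.Group"
begin

text \<open>Generators of D_n are given as a map s :: nat => 'a, where index 0 stands
for s_{1'} and index i (1 <= i <= n-1) stands for s_i.\<close>

definition gprod :: "('a, 'b) monoid_scheme \<Rightarrow> 'a list \<Rightarrow> 'a" where
  "gprod G xs = foldr (\<lambda>x y. x \<otimes>\<^bsub>G\<^esub> y) xs \<one>\<^bsub>G\<^esub>"

definition Dn_gens :: "('a, 'b) monoid_scheme \<Rightarrow> nat \<Rightarrow> (nat \<Rightarrow> 'a) \<Rightarrow> bool" where
  "Dn_gens G n s \<longleftrightarrow>
     (\<forall>i\<le>n-1. s i \<in> carrier G \<and> s i \<otimes>\<^bsub>G\<^esub> s i = \<one>\<^bsub>G\<^esub>) \<and>
     (\<forall>i. 1 \<le> i \<and> i + 1 \<le> n - 1 \<longrightarrow> (s i \<otimes>\<^bsub>G\<^esub> s (i+1)) [^]\<^bsub>G\<^esub> (3::nat) = \<one>\<^bsub>G\<^esub>) \<and>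
     (\<forall>i j. 1 \<le> i \<and> i \<le> n - 1 \<and> 1 \<le> j \<and> j \<le> n - 1 \<and> i + 2 \<le> j \<longrightarrow>
          (s i \<otimes>\<^bsub>G\<^esub> s j) [^]\<^bsub>G\<^esub> (2::nat) = \<one>\<^bsub>G\<^esub>) \<and>
     (2 \<le> n - 1 \<longrightarrow> (s 0 \<otimes>\<^bsub>G\<^esub> s 2) [^]\<^bsub>G\<^esub> (3::nat) = \<one>\<^bsub>G\<^esub>) \<and>
     (\<forall>i. 1 \<le> i \<and> i \<le> n - 1 \<and> i \<noteq> 2 \<longrightarrow> (s 0 \<otimes>\<^bsub>G\<^esub> s i) [^]\<^bsub>G\<^esub> (2::nat) = \<one>\<^bsub>G\<^esub>)"

definition tD :: "('a, 'b) monoid_scheme \<Rightarrow> (nat \<Rightarrow> 'a) \<Rightarrow> nat \<Rightarrow> 'a" where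
  "tD G s k = gprod G (map s [1..<k])"

definition wD :: "('a, 'b) monoid_scheme \<Rightarrow> (nat \<Rightarrow> 'a) \<Rightarrow> nat \<Rightarrow> 'a" where
  "wD G s k = gprod G (map s (rev [1..<k+1] @ [0] @ [2..<k+1]))"

end

theory Submission imports Defs begin

lemma gprod_Nil[simp]: "gprod G [] = \<one>\<^bsub>G\<^esub>" by (simp add: gprod_def)
lemma gprod_Cons[simp]: "gprod G (x # xs) = x \<otimes>\<^bsub>G\<^esub> gprod G xs" by (simp add: gprod_def)

lemma (in monoid) gprod_carr: "set xs \<subseteq> carrier G \<Longrightarrow> gprod G xs \<in> carrier G"
  by (induction xs) auto

lemma (in monoid) gprod_append:
  "set xs \<subseteq> carrier G \<Longrightarrow> set ys \<subseteq> carrier G \<Longrightarrow> gprod G (xs @ ys) = gprod G xs \<otimes> gprod G ys"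
  by (induction xs) (auto simp: gprod_carr m_assoc)

lemma (in monoid) gprod_snoc:
  "set xs \<subseteq> carrier G \<Longrightarrow> x \<in> carrier G \<Longrightarrow> gprod G (xs @ [x]) = gprod G xs \<otimes> x"
  by (simp add: gprod_append)

lemma (in group) comm_gen:
  assumes "x \<in> carrier G" "y \<in> carrier G" "x \<otimes> x = \<one>" "y \<otimes> y = \<one>" "x \<otimes> y \<otimes> (x \<otimes> y) = \<one>"
  shows "x \<otimes> y = y \<otimes> x"
proof -
  have ix: "inv x = x" using assms by (intro inv_equality) auto
  have iy: "inv y = y" using assms by (intro inv_equality) auto
  have "x \<otimes> y = inv (x \<otimes> y)" using assms by (intro inv_equality[symmetric]) auto
  also have "\<dots> = inv y \<otimes> inv x" using assms by (simp add: inv_mult_group)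
  finally show ?thesis using ix iy by simp
qed

lemma (in group) braid_gen:
  assumes "x \<in> carrier G" "y \<in> carrier G" "x \<otimes> x = \<one>" "y \<otimes> y = \<one>" "x \<otimes> y \<otimes> x \<otimes> (y \<otimes> x \<otimes> y) = \<one>"
  shows "x \<otimes> y \<otimes> x = y \<otimes> x \<otimes> y"
proof -
  have ix: "inv x = x" using assms by (intro inv_equality) auto
  have iy: "inv y = y" using assms by (intro inv_equality) auto
  have "x \<otimes> y \<otimes> x = inv (y \<otimes> x \<otimes> y)" using assms by (intro inv_equality[symmetric]) auto
  also have "\<dots> = inv y \<otimes> inv x \<otimes> inv y" using assms by (simp add: inv_mult_group m_assoc)
  finally show ?thesis using ix iy by simp
qed

lemma (in monoid) ctx2: "x \<otimes> y = t \<Longrightarrow> x \<in> carrier G \<Longrightarrow> y \<in> carrier G \<Longrightarrow> z \<in> carrier G \<Longrightarrow> x \<otimes> (y \<otimes> z) = t \<otimes> z"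
  by (simp add: m_assoc[symmetric])
lemma (in monoid) ctx3: "x \<otimes> y \<otimes> u = t \<Longrightarrow> x \<in> carrier G \<Longrightarrow> y \<in> carrier G \<Longrightarrow> u \<in> carrier G \<Longrightarrow> z \<in> carrier G \<Longrightarrow> x \<otimes> (y \<otimes> (u \<otimes> z)) = t \<otimes> z"
  by (simp add: m_assoc[symmetric])
lemma (in group) inv2_gen: "x \<otimes> x = \<one> \<Longrightarrow> x \<in> carrier G \<Longrightarrow> y \<in> carrier G \<Longrightarrow> x \<otimes> (x \<otimes> y) = y"
  by (simp add: m_assoc[symmetric])

locale Dn = group G for G (structure) +
  fixes n :: nat and s :: "nat \<Rightarrow> 'a"
  assumes gens: "Dn_gens G n s"
begin

lemma s_carr[simp]: "i \<le> n - 1 \<Longrightarrow> s i \<in> carrier G"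
  using gens unfolding Dn_gens_def by blast
lemma s_inv: "i \<le> n - 1 \<Longrightarrow> s i \<otimes> s i = \<one>"
  using gens unfolding Dn_gens_def by blast
lemma s_inv2: "i \<le> n - 1 \<Longrightarrow> x \<in> carrier G \<Longrightarrow> s i \<otimes> (s i \<otimes> x) = x"
  by (simp add: s_inv m_assoc[symmetric])

lemma pow2: "x \<in> carrier G \<Longrightarrow> x [^] (2::nat) = x \<otimes> x"
  by (simp add: numeral_2_eq_2)
lemma pow3: "x \<in> carrier G \<Longrightarrow> x [^] (3::nat) = x \<otimes> x \<otimes> x"
  by (simp add: numeral_3_eq_3 m_assoc)

lemma comm_ij: "1 \<le> i \<Longrightarrow> i \<le> n - 1 \<Longrightarrow> 1 \<le> j \<Longrightarrow> j \<le> n - 1 \<Longrightarrow> i + 2 \<le> j \<or> j + 2 \<le> i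
   \<Longrightarrow> s i \<otimes> s j = s j \<otimes> s i"
proof -
  assume a: "1 \<le> i" "i \<le> n - 1" "1 \<le> j" "j \<le> n - 1" "i + 2 \<le> j \<or> j + 2 \<le> i"
  have r: "\<And>i j. 1 \<le> i \<Longrightarrow> i \<le> n - 1 \<Longrightarrow> 1 \<le> j \<Longrightarrow> j \<le> n - 1 \<Longrightarrow> i + 2 \<le> j \<Longrightarrow> s i \<otimes> s j = s j \<otimes> s i"
  proof -
    fix i j assume b: "1 \<le> i" "i \<le> n - 1" "1 \<le> j" "j \<le> n - 1" "i + 2 \<le> j"
    have "(s i \<otimes> s j) [^] (2::nat) = \<one>" using gens b unfolding Dn_gens_def by blast
    then show "s i \<otimes> s j = s j \<otimes> s i" using b
      by (intro comm_gen) (auto simp: pow2 s_inv)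
  qed
  show ?thesis using a r[of i j] r[of j i] by auto
qed

lemma comm0: "1 \<le> i \<Longrightarrow> i \<le> n - 1 \<Longrightarrow> i \<noteq> 2 \<Longrightarrow> s 0 \<otimes> s i = s i \<otimes> s 0"
proof -
  assume b: "1 \<le> i" "i \<le> n - 1" "i \<noteq> 2"
  have "(s 0 \<otimes> s i) [^] (2::nat) = \<one>" using gens b unfolding Dn_gens_def by blast
  then show ?thesis using b by (intro comm_gen) (auto simp: pow2 s_inv)
qed

lemma braid: "1 \<le> i \<Longrightarrow> i + 1 \<le> n - 1 \<Longrightarrow> s i \<otimes> s (i+1) \<otimes> s i = s (i+1) \<otimes> s i \<otimes> s (i+1)"
proof -
  assume b: "1 \<le> i" "i + 1 \<le> n - 1"
  have "(s i \<otimes> s (i+1)) [^] (3::nat) = \<one>" using gens b unfolding Dn_gens_def by blast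
  then show ?thesis using b by (intro braid_gen) (auto simp: pow3 s_inv m_assoc)
qed

lemma braid0: "2 \<le> n - 1 \<Longrightarrow> s 0 \<otimes> s 2 \<otimes> s 0 = s 2 \<otimes> s 0 \<otimes> s 2"
proof -
  assume b: "2 \<le> n - 1"
  have "(s 0 \<otimes> s 2) [^] (3::nat) = \<one>" using gens b unfolding Dn_gens_def by blast
  then show ?thesis using b by (intro braid_gen) (auto simp: pow3 s_inv m_assoc)
qed

abbreviation w where "w \<equiv> wD G s"

lemma w_carr[simp]: "p \<le> n - 1 \<Longrightarrow> w p \<in> carrier G"
  unfolding wD_def by (rule gprod_carr) auto

lemma w1: "1 \<le> n - 1 \<Longrightarrow> w 1 = s 1 \<otimes> s 0"
  by (simp add: wD_def)

lemma wSuc: "1 \<le> p \<Longrightarrow> p + 1 \<le> n - 1 \<Longrightarrow> w (Suc p) = s (Suc p) \<otimes> w p \<otimes> s (Suc p)"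
proof -
  assume b: "1 \<le> p" "p + 1 \<le> n - 1"
  have e1: "rev [1..<Suc p + 1] = Suc p # rev [1..<p+1]" by simp
  have e2: "[2..<Suc p + 1] = [2..<p+1] @ [Suc p]" using b by simp
  let ?L = "map s (rev [1..<p+1] @ [0] @ [2..<p+1])"
  have L: "set ?L \<subseteq> carrier G" using b by auto
  have sc: "s (Suc p) \<in> carrier G" using b by simp
  have "w (Suc p) = gprod G (s (Suc p) # (?L @ [s (Suc p)]))"
    unfolding wD_def e1 e2 by simp
  also have "\<dots> = s (Suc p) \<otimes> (gprod G ?L \<otimes> s (Suc p))"
    using gprod_snoc[OF L sc] by (simp only: gprod_Cons)
  also have "\<dots> = s (Suc p) \<otimes> (w p \<otimes> s (Suc p))"
    by (simp only: wD_def)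
  also have "\<dots> = s (Suc p) \<otimes> w p \<otimes> s (Suc p)"
    using b by (simp add: m_assoc)
  finally show ?thesis .
qed


lemma w1s: "Suc 0 \<le> n - Suc 0 \<Longrightarrow> w (Suc 0) = s (Suc 0) \<otimes> s 0"
  using w1 by simp

lemma wsq: "1 \<le> p \<Longrightarrow> p \<le> n - 1 \<Longrightarrow> w p \<otimes> w p = \<one>"
proof (induction p)
  case 0 then show ?case by simp
next
  case (Suc p)
  show ?case
  proof (cases "p = 0")
    case True
    have c: "s 0 \<otimes> s (Suc 0) = s (Suc 0) \<otimes> s 0" using Suc True by (intro comm0) auto
    have "w (Suc p) \<otimes> w (Suc p) = s 1 \<otimes> (s 0 \<otimes> s 1) \<otimes> s 0"
      using Suc True by (simp add: w1s m_assoc)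
    also have "\<dots> = (s 1 \<otimes> s 1) \<otimes> (s 0 \<otimes> s 0)" using Suc True by (simp add: c ctx2[OF c] m_assoc)
    also have "\<dots> = \<one>" using Suc True by (simp add: s_inv)
    finally show ?thesis .
  next
    case False
    have ih: "w p \<otimes> w p = \<one>" using Suc False by simp
    have "w (Suc p) \<otimes> w (Suc p) = s (Suc p) \<otimes> (w p \<otimes> (s (Suc p) \<otimes> (s (Suc p) \<otimes> (w p \<otimes> s (Suc p)))))"
      using Suc False by (simp add: wSuc m_assoc)
    also have "\<dots> = \<one>" using Suc False
      by (simp add: s_inv2 inv2_gen[OF ih] s_inv)
    finally show ?thesis .
  qed
qed

lemma R1: "1 \<le> p \<Longrightarrow> p \<le> n - 1 \<Longrightarrow> 2 \<le> j \<Longrightarrow> j \<le> n - 1 \<Longrightarrow> j \<noteq> p \<Longrightarrow> j \<noteq> p + 1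
   \<Longrightarrow> s j \<otimes> w p = w p \<otimes> s j"
proof (induction p arbitrary: j rule: less_induct)
  case (less p)
  show ?case
  proof (cases "p = 1")
    case True
    have n1: "1 \<le> n - 1" using less.prems by simp
    have c1: "s j \<otimes> s (Suc 0) = s (Suc 0) \<otimes> s j" using less.prems True by (intro comm_ij) auto
    have c0: "s j \<otimes> s 0 = s 0 \<otimes> s j" using less.prems True comm0[of j] by auto
    have "s j \<otimes> w p = (s j \<otimes> s (Suc 0)) \<otimes> s 0" using less.prems True n1 by (simp add: w1s m_assoc)
    also have "\<dots> = s (Suc 0) \<otimes> (s j \<otimes> s 0)" using less.prems True n1 by (simp add: c1 m_assoc)
    also have "\<dots> = s (Suc 0) \<otimes> (s 0 \<otimes> s j)" by (simp add: c0)
    also have "\<dots> = w p \<otimes> s j" using less.prems True n1 by (simp add: w1s m_assoc)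
    finally show ?thesis .
  next
    case False
    then obtain p' where pp: "p = Suc p'" "1 \<le> p'" using less.prems by (cases p) auto
    have pn: "p \<le> n - 1" "p' \<le> n - 1" using less.prems pp by auto
    have wp: "w p = s p \<otimes> w p' \<otimes> s p" using pp less.prems wSuc by simp
    consider "p + 2 \<le> j" | "j + 2 \<le> p" | "j = p'" using less.prems pp by linarith
    then show ?thesis
    proof cases
      case 1
      have c: "s j \<otimes> s p = s p \<otimes> s j" using less.prems pp 1 by (intro comm_ij) auto
      have ih: "s j \<otimes> w p' = w p' \<otimes> s j" using less.prems pp 1 by (intro less.IH) auto
      show ?thesis using less.prems pn
        by (simp add: wp m_assoc ctx2[OF c] ctx2[OF ih] c)
    next
      case 2
      have c: "s j \<otimes> s p = s p \<otimes> s j" using less.prems pp 2 by (intro comm_ij) auto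
      have ih: "s j \<otimes> w p' = w p' \<otimes> s j" using less.prems pp 2 by (intro less.IH) auto
      show ?thesis using less.prems pn
        by (simp add: wp m_assoc ctx2[OF c] ctx2[OF ih] c)
    next
      case 3
      obtain r where rr: "p' = Suc r" "1 \<le> r" using 3 less.prems by (cases p') auto
      have rn: "r \<le> n - 1" using pn rr by auto
      have wp': "w p' = s p' \<otimes> w r \<otimes> s p'" using rr pp less.prems wSuc by simp
      have ih: "s p \<otimes> w r = w r \<otimes> s p" using less.prems pp rr by (intro less.IH) auto
      have br: "s p' \<otimes> s p \<otimes> s p' = s p \<otimes> s p' \<otimes> s p" using braid[of p'] pp less.prems by simp
      have br2: "s p \<otimes> (s p' \<otimes> s p) = s p' \<otimes> (s p \<otimes> s p')" using br pn by (simp add: m_assoc)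
      have "s j \<otimes> w p = s p' \<otimes> (s p \<otimes> (s p' \<otimes> (w r \<otimes> (s p' \<otimes> s p))))"
        using pn rn 3 by (simp add: wp wp' m_assoc)
      also have "\<dots> = s p \<otimes> (s p' \<otimes> (s p \<otimes> (w r \<otimes> (s p' \<otimes> s p))))"
        using pn rn by (simp add: ctx3[OF br] m_assoc)
      also have "\<dots> = s p \<otimes> (s p' \<otimes> (w r \<otimes> (s p \<otimes> (s p' \<otimes> s p))))"
        using pn rn by (simp add: ctx2[OF ih] m_assoc)
      also have "\<dots> = s p \<otimes> (s p' \<otimes> (w r \<otimes> (s p' \<otimes> (s p \<otimes> s p'))))"
        using pn rn by (simp only: br2)
      also have "\<dots> = w p \<otimes> s j"
        using pn rn 3 by (simp add: wp wp' m_assoc)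
      finally show ?thesis .
    qed
  qed
qed

lemma W2a: "2 \<le> j \<Longrightarrow> j \<le> n - 1 \<Longrightarrow> s j \<otimes> w (j - 1) = w j \<otimes> s j"
proof -
  assume b: "2 \<le> j" "j \<le> n - 1"
  then obtain p where pp: "j = Suc p" "1 \<le> p" by (cases j) auto
  have wj: "w j = s j \<otimes> w (j - 1) \<otimes> s j" using wSuc[of p] pp b by simp
  show ?thesis using b by (simp add: wj m_assoc s_inv)
qed

lemma W2b: "2 \<le> j \<Longrightarrow> j \<le> n - 1 \<Longrightarrow> s j \<otimes> w j = w (j - 1) \<otimes> s j"
proof -
  assume b: "2 \<le> j" "j \<le> n - 1"
  then obtain p where pp: "j = Suc p" "1 \<le> p" by (cases j) auto
  have wj: "w j = s j \<otimes> w (j - 1) \<otimes> s j" using wSuc[of p] pp b by simp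
  show ?thesis using b by (simp add: wj m_assoc s_inv2)
qed

lemma C2: "1 \<le> n - 1 \<Longrightarrow> s (Suc 0) \<otimes> w (Suc 0) = w (Suc 0) \<otimes> s (Suc 0)"
proof -
  assume b: "1 \<le> n - 1"
  have c01: "s 0 \<otimes> s (Suc 0) = s (Suc 0) \<otimes> s 0" using b comm0[of 1] by simp
  show ?thesis using b by (simp add: w1s c01 s_inv2 m_assoc)
qed

lemma Cbase: "2 \<le> n - 1 \<Longrightarrow> s (Suc 0) \<otimes> w (Suc (Suc 0)) = w (Suc 0) \<otimes> w (Suc (Suc 0)) \<otimes> s (Suc 0)"
proof -
  assume n2': "2 \<le> n - 1"
  have n2: "Suc (Suc 0) \<le> n - 1" using n2' by simp
  have c01: "s 0 \<otimes> s (Suc 0) = s (Suc 0) \<otimes> s 0" using n2 comm0[of 1] by simp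
  have c10: "s (Suc 0) \<otimes> s 0 = s 0 \<otimes> s (Suc 0)" using c01 by simp
  have br0: "s 0 \<otimes> s (Suc (Suc 0)) \<otimes> s 0 = s (Suc (Suc 0)) \<otimes> s 0 \<otimes> s (Suc (Suc 0))"
    using braid0 n2' by (simp add: numeral_2_eq_2)
  have br12: "s (Suc 0) \<otimes> (s (Suc (Suc 0)) \<otimes> s (Suc 0)) = s (Suc (Suc 0)) \<otimes> (s (Suc 0) \<otimes> s (Suc (Suc 0)))"
    using braid[of "Suc 0"] n2 by (simp add: m_assoc)
  have w2: "w (Suc (Suc 0)) = s (Suc (Suc 0)) \<otimes> (s (Suc 0) \<otimes> (s 0 \<otimes> s (Suc (Suc 0))))"
    using wSuc[of "Suc 0"] n2 by (simp add: w1s m_assoc)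
  have "s 0 \<otimes> (s (Suc (Suc 0)) \<otimes> (s (Suc 0) \<otimes> (s 0 \<otimes> (s (Suc (Suc 0)) \<otimes> s (Suc 0))))) = s 0 \<otimes> (s (Suc (Suc 0)) \<otimes> (s 0 \<otimes> (s (Suc 0) \<otimes> (s (Suc (Suc 0)) \<otimes> s (Suc 0)))))"
    using n2 by (simp add: ctx2[OF c10] m_assoc)
  also have "\<dots> = s (Suc (Suc 0)) \<otimes> (s 0 \<otimes> (s (Suc (Suc 0)) \<otimes> (s (Suc 0) \<otimes> (s (Suc (Suc 0)) \<otimes> s (Suc 0)))))"
    using n2 by (simp add: ctx3[OF br0] m_assoc)
  also have "\<dots> = s (Suc (Suc 0)) \<otimes> (s 0 \<otimes> (s (Suc (Suc 0)) \<otimes> (s (Suc (Suc 0)) \<otimes> (s (Suc 0) \<otimes> s (Suc (Suc 0))))))"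
    by (simp only: br12)
  also have "\<dots> = s (Suc (Suc 0)) \<otimes> (s 0 \<otimes> (s (Suc 0) \<otimes> s (Suc (Suc 0))))"
    using n2 by (simp add: s_inv2)
  also have "\<dots> = s (Suc (Suc 0)) \<otimes> (s (Suc 0) \<otimes> (s 0 \<otimes> s (Suc (Suc 0))))"
    using n2 by (simp add: ctx2[OF c01] m_assoc)
  finally have E: "s 0 \<otimes> (s (Suc (Suc 0)) \<otimes> (s (Suc 0) \<otimes> (s 0 \<otimes> (s (Suc (Suc 0)) \<otimes> s (Suc 0))))) = s (Suc (Suc 0)) \<otimes> (s (Suc 0) \<otimes> (s 0 \<otimes> s (Suc (Suc 0))))" .
  have "w (Suc 0) \<otimes> w (Suc (Suc 0)) \<otimes> s (Suc 0) = s (Suc 0) \<otimes> (s 0 \<otimes> (s (Suc (Suc 0)) \<otimes> (s (Suc 0) \<otimes> (s 0 \<otimes> (s (Suc (Suc 0)) \<otimes> s (Suc 0))))))"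
    using n2 by (simp add: w1s w2 m_assoc)
  also have "\<dots> = s (Suc 0) \<otimes> w (Suc (Suc 0))" using E w2 by simp
  finally show ?thesis by simp
qed

lemma C: "2 \<le> q \<Longrightarrow> q \<le> n - 1 \<Longrightarrow> s (Suc 0) \<otimes> w q = w (Suc 0) \<otimes> w q \<otimes> s (Suc 0)"
proof (induction q)
  case 0 then show ?case by simp
next
  case (Suc q)
  show ?case
  proof (cases "q = Suc 0")
    case True
    then show ?thesis using Cbase Suc.prems by simp
  next
    case False
    have q2: "2 \<le> q" "q \<le> n - 1" "Suc q \<le> n - 1" using Suc.prems False by auto
    have IH: "s (Suc 0) \<otimes> w q = w (Suc 0) \<otimes> w q \<otimes> s (Suc 0)" using Suc.IH q2 by simp
    have cs: "s (Suc 0) \<otimes> s (Suc q) = s (Suc q) \<otimes> s (Suc 0)" using q2 by (intro comm_ij) auto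
    have cw: "s (Suc q) \<otimes> w (Suc 0) = w (Suc 0) \<otimes> s (Suc q)" using q2 by (intro R1) auto
    have ws: "w (Suc q) = s (Suc q) \<otimes> w q \<otimes> s (Suc q)" using wSuc[of q] q2 by simp
    have "s (Suc 0) \<otimes> w (Suc q) = s (Suc q) \<otimes> (s (Suc 0) \<otimes> (w q \<otimes> s (Suc q)))"
      using q2 by (simp add: ws ctx2[OF cs] m_assoc)
    also have "\<dots> = s (Suc q) \<otimes> (w (Suc 0) \<otimes> (w q \<otimes> (s (Suc q) \<otimes> s (Suc 0))))"
      using q2 by (simp add: ctx2[OF IH] cs m_assoc)
    also have "\<dots> = w (Suc 0) \<otimes> (s (Suc q) \<otimes> (w q \<otimes> (s (Suc q) \<otimes> s (Suc 0))))"
      using q2 by (simp add: ctx2[OF cw] m_assoc)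
    also have "\<dots> = w (Suc 0) \<otimes> w (Suc q) \<otimes> s (Suc 0)"
      using q2 by (simp add: ws m_assoc)
    finally show ?thesis .
  qed
qed

lemma B1: "2 \<le> q \<Longrightarrow> q \<le> n - 1 \<Longrightarrow> w q \<otimes> w (Suc 0) = w (Suc 0) \<otimes> w q"
proof -
  assume b: "2 \<le> q" "q \<le> n - 1"
  have Cq: "s (Suc 0) \<otimes> w q = w (Suc 0) \<otimes> w q \<otimes> s (Suc 0)" using C b by simp
  have w1q: "w (Suc 0) \<otimes> w q = s (Suc 0) \<otimes> (w q \<otimes> s (Suc 0))" using b by (simp add: ctx2[OF Cq] m_assoc s_inv)
  have sq1: "w (Suc 0) \<otimes> w (Suc 0) = \<one>" using wsq[of 1] b by simp
  have sqq: "w q \<otimes> w q = \<one>" using wsq[of q] b by simp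
  have "w (Suc 0) \<otimes> w q \<otimes> (w (Suc 0) \<otimes> w q) = \<one>"
    using b by (simp only: w1q) (simp add: m_assoc s_inv2 inv2_gen[OF sqq] s_inv)
  then have "w (Suc 0) \<otimes> w q = w q \<otimes> w (Suc 0)" using b sq1 sqq by (intro comm_gen) auto
  then show ?thesis by simp
qed

end

definition sg :: "nat \<Rightarrow> nat \<Rightarrow> nat" where
  "sg j a = (if a = j then j + 1 else if a = j + 1 then j else a)"

lemma sg_range: "1 \<le> j \<Longrightarrow> j + 1 \<le> q \<Longrightarrow> 1 \<le> a \<Longrightarrow> a \<le> q \<Longrightarrow> 1 \<le> sg j a \<and> sg j a \<le> q"
  unfolding sg_def by auto

lemma foldr_range: "\<forall>x\<in>set L. 1 \<le> x \<and> x + 1 \<le> q \<Longrightarrow> 1 \<le> a \<Longrightarrow> a \<le> q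
   \<Longrightarrow> 1 \<le> foldr sg L a \<and> foldr sg L a \<le> q"
proof (induction L)
  case Nil then show ?case by simp
next
  case (Cons x L)
  then have "1 \<le> foldr sg L a \<and> foldr sg L a \<le> q" by simp
  then show ?case using Cons.prems sg_range[of x q "foldr sg L a"] by simp
qed

context Dn begin

definition dd :: "nat \<Rightarrow> nat \<Rightarrow> 'a" where
  "dd q a = (if a = Suc 0 then w q else w (a - 1) \<otimes> w q)"

lemma dd_carr[simp]: "q \<le> n - 1 \<Longrightarrow> a \<le> q + 1 \<Longrightarrow> dd q a \<in> carrier G"
  unfolding dd_def by auto

lemma S: "1 \<le> j \<Longrightarrow> j + 1 \<le> q \<Longrightarrow> q \<le> n - 1 \<Longrightarrow> 1 \<le> a \<Longrightarrow> a \<le> q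
   \<Longrightarrow> s j \<otimes> dd q a = dd q (sg j a) \<otimes> s j"
proof -
  assume b: "1 \<le> j" "j + 1 \<le> q" "q \<le> n - 1" "1 \<le> a" "a \<le> q"
  consider (j1) "j = Suc 0" | (j2) "2 \<le> j" using b by linarith
  then show ?thesis
  proof cases
    case j1
    have Cq: "s (Suc 0) \<otimes> w q = w (Suc 0) \<otimes> w q \<otimes> s (Suc 0)" using C b j1 by simp
    have C2': "s (Suc 0) \<otimes> w (Suc 0) = w (Suc 0) \<otimes> s (Suc 0)" using C2 b by simp
    have sq1: "w (Suc 0) \<otimes> w (Suc 0) = \<one>" using wsq[of 1] b by simp
    consider "a = Suc 0" | "a = 2" | "3 \<le> a" using b by linarith
    then show ?thesis
    proof cases
      case 1
      then show ?thesis using b j1 by (simp add: dd_def sg_def Cq)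
    next
      case 2
      then show ?thesis using b j1 by (simp add: dd_def sg_def ctx2[OF C2'] Cq inv2_gen[OF sq1] m_assoc)
    next
      case 3
      have Ca: "s (Suc 0) \<otimes> w (a - Suc 0) = w (Suc 0) \<otimes> w (a - Suc 0) \<otimes> s (Suc 0)" using C b 3 by simp
      have Ba: "w (a - Suc 0) \<otimes> w (Suc 0) = w (Suc 0) \<otimes> w (a - Suc 0)" using B1 b 3 by simp
      show ?thesis using b j1 3
        by (simp add: dd_def sg_def ctx2[OF Ca] Cq ctx2[OF Ba] inv2_gen[OF sq1] m_assoc)
    qed
  next
    case j2
    have Rq: "s j \<otimes> w q = w q \<otimes> s j" using b j2 by (intro R1) auto
    consider "a = Suc 0" | "a = j" | "a = j + 1" | "2 \<le> a" "a \<noteq> j" "a \<noteq> j + 1" using b by linarith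
    then show ?thesis
    proof cases
      case 1
      then show ?thesis using b j2 by (simp add: dd_def sg_def Rq)
    next
      case 2
      have W: "s j \<otimes> w (j - Suc 0) = w j \<otimes> s j" using W2a b j2 by simp
      show ?thesis using b j2 2 by (simp add: dd_def sg_def ctx2[OF W] Rq m_assoc)
    next
      case 3
      have W: "s j \<otimes> w j = w (j - Suc 0) \<otimes> s j" using W2b b j2 by simp
      show ?thesis using b j2 3 by (simp add: dd_def sg_def ctx2[OF W] Rq m_assoc)
    next
      case 4
      have W: "s j \<otimes> w (a - Suc 0) = w (a - Suc 0) \<otimes> s j" using b j2 4 by (intro R1) auto
      show ?thesis using b j2 4 by (simp add: dd_def sg_def ctx2[OF W] Rq m_assoc)
    qed
  qed
qed

lemma Lprod: "\<forall>x\<in>set L. 1 \<le> x \<and> x + 1 \<le> q \<Longrightarrow> q \<le> n - 1 \<Longrightarrow> 1 \<le> a \<Longrightarrow> a \<le> q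
   \<Longrightarrow> gprod G (map s L) \<otimes> dd q a = dd q (foldr sg L a) \<otimes> gprod G (map s L)"
proof (induction L arbitrary: a)
  case Nil
  then show ?case by simp
next
  case (Cons x L)
  have r: "1 \<le> foldr sg L a \<and> foldr sg L a \<le> q" using foldr_range[of L q a] Cons.prems by simp
  have Lc: "gprod G (map s L) \<in> carrier G" using Cons.prems by (intro gprod_carr) auto
  have xc: "s x \<in> carrier G" using Cons.prems by auto
  have ih: "gprod G (map s L) \<otimes> dd q a = dd q (foldr sg L a) \<otimes> gprod G (map s L)"
    using Cons by simp
  have st: "s x \<otimes> dd q (foldr sg L a) = dd q (sg x (foldr sg L a)) \<otimes> s x"
    using Cons.prems r by (intro S) auto
  have r2: "sg x (foldr sg L a) \<le> q" using sg_range[of x q "foldr sg L a"] Cons.prems r by auto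
  have "gprod G (map s (x # L)) \<otimes> dd q a = s x \<otimes> (gprod G (map s L) \<otimes> dd q a)"
    using Lc xc Cons.prems by (simp add: m_assoc)
  also have "\<dots> = (s x \<otimes> dd q (foldr sg L a)) \<otimes> gprod G (map s L)"
    using Lc xc Cons.prems r by (simp add: ih m_assoc)
  also have "\<dots> = dd q (foldr sg (x # L) a) \<otimes> gprod G (map s (x # L))"
    using Lc xc Cons.prems r r2 by (simp add: st m_assoc)
  finally show ?case .
qed

end

lemma foldr_sg: "1 \<le> k \<Longrightarrow> foldr sg [1..<k] a = (if 1 \<le> a \<and> a < k then a + 1 else if a = k then 1 else a)"
proof (induction k arbitrary: a)
  case 0 then show ?case by simp
next
  case (Suc k)
  show ?case
  proof (cases "k = 0")
    case True then show ?thesis by simp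
  next
    case False
    then show ?thesis using Suc by (auto simp: sg_def)
  qed
qed

context Dn begin

lemma tstep: "1 \<le> k \<Longrightarrow> k \<le> q \<Longrightarrow> q \<le> n - 1 \<Longrightarrow> 1 \<le> a \<Longrightarrow> a \<le> k
   \<Longrightarrow> tD G s k \<otimes> dd q a = dd q (if a < k then a + 1 else 1) \<otimes> tD G s k"
  unfolding tD_def using Lprod[of "[1..<k]" q a] foldr_sg[of k a] by auto

lemma t_carr: "k \<le> n \<Longrightarrow> tD G s k \<in> carrier G"
  unfolding tD_def by (intro gprod_carr) auto

lemma tpow: "1 \<le> k \<Longrightarrow> k \<le> q \<Longrightarrow> q \<le> n - 1 \<Longrightarrow> 1 \<le> a \<Longrightarrow> a + i \<le> k
   \<Longrightarrow> tD G s k [^] i \<otimes> dd q a = dd q (a + i) \<otimes> tD G s k [^] i"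
proof (induction i arbitrary: a)
  case 0 then show ?case by simp
next
  case (Suc i)
  have tc: "tD G s k \<in> carrier G" using Suc.prems by (intro t_carr) auto
  have st: "tD G s k \<otimes> dd q a = dd q (a + 1) \<otimes> tD G s k"
    using tstep[of k q a] Suc.prems by simp
  have ih: "tD G s k [^] i \<otimes> dd q (Suc a) = dd q (Suc (a + i)) \<otimes> tD G s k [^] i"
    using Suc.IH[of "Suc a"] Suc.prems by simp
  have "tD G s k [^] Suc i \<otimes> dd q a = tD G s k [^] i \<otimes> (tD G s k \<otimes> dd q a)"
    using tc Suc.prems by (simp add: m_assoc)
  also have "\<dots> = (tD G s k [^] i \<otimes> dd q (a + 1)) \<otimes> tD G s k"
    using tc Suc.prems by (simp add: st m_assoc)
  also have "\<dots> = dd q (a + Suc i) \<otimes> tD G s k [^] Suc i"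
    using tc Suc.prems by (simp add: ctx2[OF ih] m_assoc)
  finally show ?case .
qed

lemma twrap: "1 \<le> k \<Longrightarrow> k \<le> q \<Longrightarrow> q \<le> n - 1 \<Longrightarrow> 1 \<le> a \<Longrightarrow> a \<le> k \<Longrightarrow> a + i = k + 1
   \<Longrightarrow> tD G s k [^] i \<otimes> dd q a = dd q 1 \<otimes> tD G s k [^] i"
proof -
  assume b: "1 \<le> k" "k \<le> q" "q \<le> n - 1" "1 \<le> a" "a \<le> k" "a + i = k + 1"
  then obtain i' where ii: "i = Suc i'" by (cases i) auto
  have tc: "tD G s k \<in> carrier G" using b by (intro t_carr) auto
  have p: "tD G s k [^] i' \<otimes> dd q a = dd q k \<otimes> tD G s k [^] i'"
    using tpow[of k q a i'] b ii by simp
  have st: "tD G s k \<otimes> dd q k = dd q 1 \<otimes> tD G s k"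
    using tstep[of k q k] b by simp
  have ps: "tD G s k [^] i = tD G s k \<otimes> tD G s k [^] i'"
    by (simp only: ii nat_pow_Suc2[OF tc])
  have "tD G s k [^] i \<otimes> dd q a = tD G s k \<otimes> (tD G s k [^] i' \<otimes> dd q a)"
    unfolding ps using tc b ii by (simp add: m_assoc)
  also have "\<dots> = (tD G s k \<otimes> dd q k) \<otimes> tD G s k [^] i'"
    using tc b by (simp add: p m_assoc)
  also have "\<dots> = dd q 1 \<otimes> tD G s k [^] i"
    unfolding ps using tc b ii by (simp add: st m_assoc)
  finally show ?thesis .
qed

end


context Dn begin

lemma main_loc:
  fixes m q :: nat and k i :: "nat \<Rightarrow> nat"
  assumes "n \<ge> 2"
    and "m \<ge> 1"
    and "2 \<le> k 0"
    and "\<forall>j. j + 1 < m \<longrightarrow> k j < k (j + 1)"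
    and "k (m - 1) \<le> n"
    and "\<forall>j<m. 1 \<le> i j \<and> i j \<le> k j - 1"
    and "(\<Sum>j<m. i j) \<le> k 0"
    and "k (m - 1) \<le> q" and "q \<le> n - 1"
  shows "let maj = (\<Sum>j<m. i j);
             \<pi>\<^sub>1 = gprod G (map (\<lambda>j. tD G s (k j) [^]\<^bsub>G\<^esub> i j) [0..<m])
         in (if maj = k 0
             then \<pi>\<^sub>1 \<otimes>\<^bsub>G\<^esub> wD G s q = wD G s q \<otimes>\<^bsub>G\<^esub> \<pi>\<^sub>1
             else \<pi>\<^sub>1 \<otimes>\<^bsub>G\<^esub> wD G s q = wD G s maj \<otimes>\<^bsub>G\<^esub> wD G s q \<otimes>\<^bsub>G\<^esub> \<pi>\<^sub>1)"
proof -
  note A = assms(1) assms(1) assms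
  define maj where "maj = (\<Sum>j<m. i j)"
  define f where "f = (\<lambda>j. tD G s (k j) [^] i j)"
  define SS where "SS = (\<lambda>l. \<Sum>x\<in>{l..<m}. i x)"
  have kmono: "\<And>j l. l < m \<Longrightarrow> j \<le> l \<Longrightarrow> k j \<le> k l"
  proof -
    fix j l show "l < m \<Longrightarrow> j \<le> l \<Longrightarrow> k j \<le> k l"
    proof (induction l)
      case 0 then show ?case by simp
    next
      case (Suc l)
      show ?case
      proof (cases "j = Suc l")
        case True then show ?thesis by simp
      next
        case False
        then have "k j \<le> k l" using Suc by simp
        moreover have "k l < k (l + 1)" using A(6) Suc.prems by simp
        ultimately show ?thesis by simp
      qed
    qed
  qed
  have kq: "\<And>l. l < m \<Longrightarrow> k l \<le> q" using kmono[of "m - 1"] A(4,10) by (metis diff_less le_less_trans le_trans less_one not_le diff_Suc_less le_antisym Suc_pred' less_Suc_eq_le nat_le_linear zero_less_one le_add1) 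
  have k0l: "\<And>l. l < m \<Longrightarrow> k 0 \<le> k l" using kmono by simp
  have qn: "q \<le> n - 1" using A(11) .
  have fc: "\<And>l. l < m \<Longrightarrow> f l \<in> carrier G"
    unfolding f_def using kq qn by (intro nat_pow_closed t_carr) (meson le_trans diff_le_self)
  have gc: "\<And>j. gprod G (map f [j..<m]) \<in> carrier G"
    using fc by (intro gprod_carr) auto
  have maj0: "maj = i 0 + SS 1"
    unfolding maj_def SS_def using A(4)
    by (simp add: lessThan_atLeast0 sum.atLeast_Suc_lessThan)
  have SSle: "\<And>l. 1 \<le> l \<Longrightarrow> SS l \<le> SS 1"
    unfolding SS_def by (rule sum_mono2) auto
  have i0: "1 \<le> i 0" using A(4,8) by simp
  have P: "\<And>j. j \<le> m \<Longrightarrow> (1 \<le> j \<or> maj < k 0) \<Longrightarrow>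
      gprod G (map f [j..<m]) \<otimes> dd q 1 = dd q (1 + SS j) \<otimes> gprod G (map f [j..<m])"
  proof -
    fix j assume jm: "j \<le> m"
    then show "(1 \<le> j \<or> maj < k 0) \<Longrightarrow>
      gprod G (map f [j..<m]) \<otimes> dd q 1 = dd q (1 + SS j) \<otimes> gprod G (map f [j..<m])"
    proof (induction j rule: inc_induct)
      case base
      then show ?case using qn by (simp add: SS_def)
    next
      case (step l)
      have ul: "[l..<m] = l # [Suc l..<m]" using step by (simp add: upt_conv_Cons)
      have sl: "SS l = i l + SS (Suc l)" unfolding SS_def using step by (simp add: sum.atLeast_Suc_lessThan)
      have ih: "gprod G (map f [Suc l..<m]) \<otimes> dd q 1 = dd q (1 + SS (Suc l)) \<otimes> gprod G (map f [Suc l..<m])"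
        using step by simp
      have bound: "1 + SS l \<le> k l"
      proof (cases "l = 0")
        case True
        then show ?thesis using step.prems maj0 sl unfolding maj_def SS_def
          by (simp add: lessThan_atLeast0)
      next
        case False
        have "SS l \<le> SS 1" using SSle False by simp
        then have "1 + SS l \<le> k 0" using maj0 i0 A(9) unfolding maj_def by simp
        then show ?thesis using k0l[of l] step by simp
      qed
      have tp: "f l \<otimes> dd q (1 + SS (Suc l)) = dd q (1 + SS l) \<otimes> f l"
        unfolding f_def using tpow[of "k l" q "1 + SS (Suc l)" "i l"] kq[of l] step bound sl qn A(5) k0l[of l]
        by (simp add: add.commute add.left_commute)
      have SSq: "1 + SS l \<le> q + 1" "1 + SS (Suc l) \<le> q + 1" using bound kq[of l] step sl by auto
      have "gprod G (map f [l..<m]) \<otimes> dd q 1 = f l \<otimes> (gprod G (map f [Suc l..<m]) \<otimes> dd q 1)"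
        unfolding ul using fc[of l] gc qn step by (simp add: m_assoc)
      also have "\<dots> = (f l \<otimes> dd q (1 + SS (Suc l))) \<otimes> gprod G (map f [Suc l..<m])"
        unfolding ih using fc[of l] gc qn step SSq by (simp add: m_assoc)
      also have "\<dots> = dd q (1 + SS l) \<otimes> gprod G (map f [l..<m])"
        unfolding tp ul using fc[of l] gc qn step SSq by (simp add: m_assoc)
      finally show ?case .
    qed
  qed
  have dd1: "dd q 1 = wD G s q" by (simp add: dd_def)
  have pi: "gprod G (map (\<lambda>j. tD G s (k j) [^]\<^bsub>G\<^esub> i j) [0..<m]) = gprod G (map f [0..<m])"
    unfolding f_def by simp
  have SS0: "SS 0 = maj" unfolding SS_def maj_def by (simp add: lessThan_atLeast0)
  show ?thesis
  proof (cases "maj = k 0")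
    case False
    then have "maj < k 0" using A(9) maj_def by simp
    then have "gprod G (map f [0..<m]) \<otimes> dd q 1 = dd q (1 + maj) \<otimes> gprod G (map f [0..<m])"
      using P[of 0] SS0 by simp
    moreover have "dd q (1 + maj) = wD G s maj \<otimes> wD G s q"
      using maj0 i0 by (simp add: dd_def)
    ultimately have "gprod G (map f [0..<m]) \<otimes> wD G s q = wD G s maj \<otimes> wD G s q \<otimes> gprod G (map f [0..<m])"
      using dd1 by simp
    then show ?thesis using False by (simp add: Let_def maj_def[symmetric] pi)
  next
    case True
    have u0: "[0..<m] = 0 # [1..<m]" using A(4) by (simp add: upt_conv_Cons)
    have p1: "gprod G (map f [1..<m]) \<otimes> dd q 1 = dd q (1 + SS 1) \<otimes> gprod G (map f [1..<m])"
      using P[of 1] A(4) by simp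
    have tw: "f 0 \<otimes> dd q (1 + SS 1) = dd q 1 \<otimes> f 0"
      unfolding f_def using twrap[of "k 0" q "1 + SS 1" "i 0"] kq[of 0] A(4,5) qn True maj0 i0
      by simp
    have SSq: "1 + SS 1 \<le> q + 1" using True maj0 kq[of 0] A(4) by simp
    have "gprod G (map f [0..<m]) \<otimes> dd q 1 = f 0 \<otimes> (gprod G (map f [1..<m]) \<otimes> dd q 1)"
      unfolding u0 using fc[of 0] gc qn A(4) by (simp add: m_assoc)
    also have "\<dots> = (f 0 \<otimes> dd q (1 + SS 1)) \<otimes> gprod G (map f [1..<m])"
      unfolding p1 using fc[of 0] gc qn A(4) SSq by (simp add: m_assoc)
    also have "\<dots> = dd q 1 \<otimes> gprod G (map f [0..<m])"
      unfolding tw u0 using fc[of 0] gc qn A(4) by (simp add: m_assoc)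
    finally have "gprod G (map f [0..<m]) \<otimes> wD G s q = wD G s q \<otimes> gprod G (map f [0..<m])"
      using dd1 by simp
    then show ?thesis using True by (simp add: Let_def maj_def[symmetric] pi)
  qed
qed


end

theorem mainTheorem7:
  fixes G :: "('a, 'b) monoid_scheme" and s :: "nat \<Rightarrow> 'a"
    and n m q :: nat and k i :: "nat \<Rightarrow> nat"
  assumes "group G"
    and "Dn_gens G n s"
    and "n \<ge> 2"
    and "m \<ge> 1"
    and "2 \<le> k 0"
    and "\<forall>j. j + 1 < m \<longrightarrow> k j < k (j + 1)"
    and "k (m - 1) \<le> n"
    and "\<forall>j<m. 1 \<le> i j \<and> i j \<le> k j - 1"
    and "(\<Sum>j<m. i j) \<le> k 0"
    and "k (m - 1) \<le> q" and "q \<le> n - 1"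
  shows "let maj = (\<Sum>j<m. i j);
             \<pi>\<^sub>1 = gprod G (map (\<lambda>j. tD G s (k j) [^]\<^bsub>G\<^esub> i j) [0..<m])
         in (if maj = k 0
             then \<pi>\<^sub>1 \<otimes>\<^bsub>G\<^esub> wD G s q = wD G s q \<otimes>\<^bsub>G\<^esub> \<pi>\<^sub>1
             else \<pi>\<^sub>1 \<otimes>\<^bsub>G\<^esub> wD G s q = wD G s maj \<otimes>\<^bsub>G\<^esub> wD G s q \<otimes>\<^bsub>G\<^esub> \<pi>\<^sub>1)"
proof -
  interpret Dn G n s using assms(1,2) by (simp add: Dn_def Dn_axioms_def)
  show ?thesis using main_loc[OF assms(3-11)] by simp
qed

end
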